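(* Let $f$ be an essentially sub-linear dimension function. Then $\lim_{x\to 0}\frac{f(x)}{x}=\infty$, and there exist constants $C\ge 1$ and $\delta>0$ such that $\frac{f(x_2)}{x_2}\le C\,\frac{f(x_1)}{x_1}$ whenever $0<x_1<x_2<\delta$.
   Context: A dimension function is an increasing continuous function $f:\mathbb{R}_+\to\mathbb{R}_+$ with $f(r)\to 0$ as $r\to 0$. It is essentially sub-linear if there exists $B>1$ such that $\limsup_{x\to 0}\frac{f(Bx)}{f(x)}<B$. *)

theory Defs
  imports "HOL-Analysis.Analysis"
begin

definition dimension_function :: "(real \<Rightarrow> real) \<Rightarrow> bool" where
  "dimension_function f \<longleftrightarrow>
     mono_on {0<..} f \<and> continuous_on {0<..} f \<and> (\<forall>r>0. f r > 0) \<and>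
     (f \<longlongrightarrow> 0) (at_right 0)"

definition essentially_sublinear :: "(real \<Rightarrow> real) \<Rightarrow> bool" where
  "essentially_sublinear f \<longleftrightarrow>
     (\<exists>B>1. Limsup (at_right 0) (\<lambda>x. ereal (f (B * x) / f x)) < ereal B)"

end

theory Submission
  imports Defs
begin

theorem mainTheorem4:
  fixes f :: "real \<Rightarrow> real"
  assumes "dimension_function f" and "essentially_sublinear f"
  shows "filterlim (\<lambda>x. f x / x) at_top (at_right 0) \<and>
     (\<exists>C \<ge> 1. \<exists>\<delta> > 0. \<forall>x1 x2. 0 < x1 \<and> x1 < x2 \<and> x2 < \<delta> \<longrightarrow>
            f x2 / x2 \<le> C * (f x1 / x1))"
proof -
  have mono: "\<And>a b. 0 < a \<Longrightarrow> a \<le> b \<Longrightarrow> f a \<le> f b"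
    using assms(1) unfolding dimension_function_def
    by (meson greaterThan_iff less_le_trans mono_onD)
  have pos: "\<And>r. r > 0 \<Longrightarrow> f r > 0" using assms(1) unfolding dimension_function_def by blast
  obtain B where B1: "B > 1" and L: "Limsup (at_right 0) (\<lambda>x. ereal (f (B * x) / f x)) < ereal B"
    using assms(2) unfolding essentially_sublinear_def by blast
  obtain q0 where q0: "Limsup (at_right 0) (\<lambda>x. ereal (f (B * x) / f x)) < ereal q0" "ereal q0 < ereal B"
    using ereal_dense2[OF L] by blast
  define q where "q = max q0 1"
  have qB: "q < B" using q0(2) B1 by (simp add: q_def)
  have q1: "q \<ge> 1" by (simp add: q_def)
  have ev: "eventually (\<lambda>x. ereal (f (B * x) / f x) < ereal q0) (at_right 0)"
    using Limsup_lessD[OF q0(1)] .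
  then obtain d0 where d0: "d0 > 0" "\<And>y. y > 0 \<Longrightarrow> y < d0 \<Longrightarrow> f (B * y) / f y < q0"
    unfolding eventually_at_right_field by auto
  have A: "f (B * x) \<le> q * f x" if "0 < x" "x < d0" for x
  proof -
    have "f (B*x) / f x < q" using d0(2)[OF that] by (simp add: q_def)
    with pos[OF \<open>0<x\<close>] show ?thesis by (simp add: divide_less_eq)
  qed
  have Bq: "f (B * x) / (B * x) \<le> (q / B) * (f x / x)" if "0 < x" "x < d0" for x
  proof -
    have "f (B * x) / (B * x) = (f (B*x) / B) / x" by simp
    also have "\<dots> \<le> (q * f x / B) / x"
      using A[OF that] B1 that by (simp add: divide_right_mono)
    finally show ?thesis by simp
  qed
  have claim: "\<forall>x1 x2. 0 < x1 \<longrightarrow> x1 < x2 \<longrightarrow> x2 < d0 \<longrightarrow> x2 \<le> B^n * x1 \<longrightarrow>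
      f x2 / x2 \<le> q * (f x1 / x1)" for n
  proof (induction n)
    case 0
    then show ?case by auto
  next
    case (Suc n)
    show ?case
    proof (intro allI impI)
      fix x1 x2 :: real
      assume h: "0 < x1" "x1 < x2" "x2 < d0" "x2 \<le> B ^ Suc n * x1"
      show "f x2 / x2 \<le> q * (f x1 / x1)"
      proof (cases "x2 \<le> B * x1")
        case True
        have "f x2 / x2 \<le> f (B*x1) / x2" using mono[of x2 "B*x1"] h True pos[of x2]
          by (simp add: divide_right_mono)
        also have "\<dots> \<le> f (B*x1) / x1" using h pos[of "B*x1"] B1
          by (intro divide_left_mono) auto
        also have "\<dots> \<le> q * f x1 / x1" using A[of x1] h by (simp add: divide_right_mono)
        finally show ?thesis by simp
      next
        case False
        define y where "y = x2 / B"
        have y: "x1 < y" "y < x2" "y \<le> B^n * x1" "x2 = B * y"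
          using False h B1 by (auto simp: y_def field_simps)
        have "f x2 / x2 \<le> (q / B) * (f y / y)" using Bq[of y] y h by simp
        also have "\<dots> \<le> f y / y"
        proof -
          have "f y / y > 0" using pos[of y] y h by simp
          moreover have "q / B \<le> 1" using qB B1 by simp
          ultimately show ?thesis using mult_left_le_one_le[of "f y / y" "q / B"] q1 B1 by simp
        qed
        also have "\<dots> \<le> q * (f x1 / x1)" using Suc.IH y h by (meson less_trans)
        finally show ?thesis .
      qed
    qed
  qed
  have part2: "\<And>x1 x2. 0 < x1 \<Longrightarrow> x1 < x2 \<Longrightarrow> x2 < d0 \<Longrightarrow> f x2 / x2 \<le> q * (f x1 / x1)"
  proof -
    fix x1 x2 :: real assume h: "0 < x1" "x1 < x2" "x2 < d0"
    obtain n where "x2 / x1 < B ^ n" using real_arch_pow[OF B1] by blast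
    hence "x2 \<le> B^n * x1" using h by (simp add: divide_less_eq)
    thus "f x2 / x2 \<le> q * (f x1 / x1)" using claim h by blast
  qed
  define x0 where "x0 = d0 / 2"
  have x0: "0 < x0" "x0 < d0" using d0 by (auto simp: x0_def)
  define K where "K = (f x0 / x0) / q"
  have K: "K > 0" using pos[OF x0(1)] x0 q1 by (simp add: K_def)
  define r where "r = q / B"
  have r: "0 < r" "r < 1" using q1 qB B1 by (auto simp: r_def)
  have low: "\<forall>x. 0 < x \<longrightarrow> x \<le> x0 / B^n \<longrightarrow> f x / x \<ge> K / r^n" for n
  proof (induction n)
    case 0
    show ?case
    proof (intro allI impI)
      fix x :: real assume h: "0 < x" "x \<le> x0 / B^0"
      show "f x / x \<ge> K / r^0"
      proof (cases "x = x0")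
        case True thus ?thesis using q1 pos[OF x0(1)] x0 by (simp add: K_def divide_le_eq)
      next
        case False
        hence "f x0 / x0 \<le> q * (f x / x)" using part2[of x x0] h x0 by simp
        moreover have qp: "q > 0" using q1 by simp
        ultimately have "(f x0 / x0) / q \<le> f x / x" unfolding pos_divide_le_eq[OF qp] by (simp add: mult.commute)
        thus ?thesis by (simp add: K_def)
      qed
    qed
  next
    case (Suc n)
    show ?case
    proof (intro allI impI)
      fix x :: real assume h: "0 < x" "x \<le> x0 / B^Suc n"
      have Bn: "B^n \<ge> 1" using B1 by simp
      have "B * x \<le> x0 / B^n" using h B1 by (simp add: field_simps)
      hence i: "f (B*x) / (B*x) \<ge> K / r^n" using Suc.IH h B1 by simp
      have "x \<le> x0" 
      proof -
        have "B^Suc n \<ge> 1" using B1 one_le_power[of B "Suc n"] by linarith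
        hence "x0 / B^Suc n \<le> x0" using x0 by (simp add: divide_le_eq)
        thus ?thesis using h by simp
      qed
      hence "f (B*x) / (B*x) \<le> r * (f x / x)" using Bq[of x] h x0 by (simp add: r_def)
      with i have "K / r^n \<le> r * (f x / x)" by simp
      thus "f x / x \<ge> K / r^Suc n" using r by (simp add: field_simps)
    qed
  qed
  have part1: "filterlim (\<lambda>x. f x / x) at_top (at_right 0)"
    unfolding filterlim_at_top
  proof
    fix Z :: real
    have "1 < 1 / r" using r by simp
    then obtain n where n: "Z / K < (1/r)^n" using real_arch_pow by blast
    have Zle: "Z \<le> K / r^n" using n K r by (simp add: field_simps power_divide)
    have "x0 / B^n > 0" using x0 B1 by simp
    then show "eventually (\<lambda>x. Z \<le> f x / x) (at_right 0)"
      unfolding eventually_at_right_field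
      using low[of n] Zle by (intro exI[of _ "x0 / B^n"]) force
  qed
  show ?thesis using part1 part2 q1 d0 by blast
qed

end
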